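(* Fix finite nonempty $A$, $\Omega$, a full-support prior $\mu_0$ on $\Omega$, and a finite $M$ with $|M|>\max\{|\Omega|,|A|\}$. There is a set of transparent environments of Lebesgue measure one in $[0,1]^{|A|(|\Omega|+1)}$ such that, for every environment in it, if cheap-talk Sender values randomization then commitment is valuable.
   Context: An environment $(u_S,u_R)$ with $u_S,u_R:A\times\Omega\to[0,1]$ is transparent if there is $v:A\to[0,1]$ with $u_S(a,\omega)=v(a)$ for all $a,\omega$; the set of transparent environments is identified with $[0,1]^{|A|(|\Omega|+1)}$ (coordinates $v$ and $u_R$). Messaging strategies $\sigma:\Omega\to\Delta M$, action strategies $\rho:M\to\Delta A$, $U_i(\sigma,\rho)=\sum_{\omega,m,a}\mu_0(\omega)\sigma(m|\omega)\rho(a|m)u_i(a,\omega)$. $(\sigma,\rho)$ is S-BR if $\sigma\in\arg\max_{\sigma'}U_S(\sigma',\rho)$ and R-BR if $\rho\in\arg\max_{\rho'}U_R(\sigma,\rho')$; a cheap-talk equilibrium is both. Persuasion payoff: max of $U_S$ over R-BR profiles; cheap-talk payoff: max over cheap-talk equilibria. Commitment is valuable if persuasion payoff > cheap-talk payoff. $\sigma$ is partitional if for every $\omega$ some $m$ has $\sigma(m|\omega)=1$. Partitional cheap-talk payoff: max of $U_S$ over cheap-talk equilibria with partitional $\sigma$. Cheap-talk Sender values randomization if cheap-talk payoff > partitional cheap-talk payoff. *)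

theory Defs
  imports "HOL-Analysis.Analysis"
begin

definition is_dist :: "('x::finite \<Rightarrow> real) \<Rightarrow> bool" where
  "is_dist p \<longleftrightarrow> (\<forall>x. 0 \<le> p x) \<and> sum p UNIV = 1"

definition msg_strat :: "('w::finite \<Rightarrow> 'm::finite \<Rightarrow> real) \<Rightarrow> bool" where
  "msg_strat \<sigma> \<longleftrightarrow> (\<forall>\<omega>. is_dist (\<sigma> \<omega>))"

definition act_strat :: "('m::finite \<Rightarrow> 'a::finite \<Rightarrow> real) \<Rightarrow> bool" where
  "act_strat \<rho> \<longleftrightarrow> (\<forall>m. is_dist (\<rho> m))"

definition payoff :: "('w::finite \<Rightarrow> real) \<Rightarrow> ('a::finite \<Rightarrow> 'w \<Rightarrow> real)
    \<Rightarrow> ('w \<Rightarrow> 'm::finite \<Rightarrow> real) \<Rightarrow> ('m \<Rightarrow> 'a \<Rightarrow> real) \<Rightarrow> real" where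
  "payoff mu u \<sigma> \<rho> = (\<Sum>\<omega>\<in>UNIV. \<Sum>m\<in>UNIV. \<Sum>a\<in>UNIV. mu \<omega> * \<sigma> \<omega> m * \<rho> m a * u a \<omega>)"

definition S_BR :: "('w::finite \<Rightarrow> real) \<Rightarrow> ('a::finite \<Rightarrow> 'w \<Rightarrow> real)
    \<Rightarrow> ('w \<Rightarrow> 'm::finite \<Rightarrow> real) \<Rightarrow> ('m \<Rightarrow> 'a \<Rightarrow> real) \<Rightarrow> bool" where
  "S_BR mu uS \<sigma> \<rho> \<longleftrightarrow> (\<forall>\<sigma>'. msg_strat \<sigma>' \<longrightarrow> payoff mu uS \<sigma>' \<rho> \<le> payoff mu uS \<sigma> \<rho>)"

definition R_BR :: "('w::finite \<Rightarrow> real) \<Rightarrow> ('a::finite \<Rightarrow> 'w \<Rightarrow> real)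
    \<Rightarrow> ('w \<Rightarrow> 'm::finite \<Rightarrow> real) \<Rightarrow> ('m \<Rightarrow> 'a \<Rightarrow> real) \<Rightarrow> bool" where
  "R_BR mu uR \<sigma> \<rho> \<longleftrightarrow> (\<forall>\<rho>'. act_strat \<rho>' \<longrightarrow> payoff mu uR \<sigma> \<rho>' \<le> payoff mu uR \<sigma> \<rho>)"

definition cheap_talk_eq :: "('w::finite \<Rightarrow> real) \<Rightarrow> ('a::finite \<Rightarrow> 'w \<Rightarrow> real) \<Rightarrow> ('a \<Rightarrow> 'w \<Rightarrow> real)
    \<Rightarrow> ('w \<Rightarrow> 'm::finite \<Rightarrow> real) \<Rightarrow> ('m \<Rightarrow> 'a \<Rightarrow> real) \<Rightarrow> bool" where
  "cheap_talk_eq mu uS uR \<sigma> \<rho> \<longleftrightarrow>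
     msg_strat \<sigma> \<and> act_strat \<rho> \<and> S_BR mu uS \<sigma> \<rho> \<and> R_BR mu uR \<sigma> \<rho>"

definition partitional :: "('w \<Rightarrow> 'm \<Rightarrow> real) \<Rightarrow> bool" where
  "partitional \<sigma> \<longleftrightarrow> (\<forall>\<omega>. \<exists>m. \<sigma> \<omega> m = 1)"

text \<open>Payoffs as suprema (the maxima exist; the Sup coincides with the max).
  The message type is passed as an itself-argument.\<close>

definition persuasion_payoff :: "'m::finite itself \<Rightarrow> ('w::finite \<Rightarrow> real)
    \<Rightarrow> ('a::finite \<Rightarrow> 'w \<Rightarrow> real) \<Rightarrow> ('a \<Rightarrow> 'w \<Rightarrow> real) \<Rightarrow> real" where
  "persuasion_payoff _ mu uS uR = Sup {payoff mu uS \<sigma> \<rho> | (\<sigma> :: 'w \<Rightarrow> 'm \<Rightarrow> real) \<rho>.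
      msg_strat \<sigma> \<and> act_strat \<rho> \<and> R_BR mu uR \<sigma> \<rho>}"

definition cheap_talk_payoff :: "'m::finite itself \<Rightarrow> ('w::finite \<Rightarrow> real)
    \<Rightarrow> ('a::finite \<Rightarrow> 'w \<Rightarrow> real) \<Rightarrow> ('a \<Rightarrow> 'w \<Rightarrow> real) \<Rightarrow> real" where
  "cheap_talk_payoff _ mu uS uR = Sup {payoff mu uS \<sigma> \<rho> | (\<sigma> :: 'w \<Rightarrow> 'm \<Rightarrow> real) \<rho>.
      cheap_talk_eq mu uS uR \<sigma> \<rho>}"

definition partitional_cheap_talk_payoff :: "'m::finite itself \<Rightarrow> ('w::finite \<Rightarrow> real)
    \<Rightarrow> ('a::finite \<Rightarrow> 'w \<Rightarrow> real) \<Rightarrow> ('a \<Rightarrow> 'w \<Rightarrow> real) \<Rightarrow> real" where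
  "partitional_cheap_talk_payoff _ mu uS uR = Sup {payoff mu uS \<sigma> \<rho> | (\<sigma> :: 'w \<Rightarrow> 'm \<Rightarrow> real) \<rho>.
      cheap_talk_eq mu uS uR \<sigma> \<rho> \<and> partitional \<sigma>}"

definition commitment_valuable :: "'m::finite itself \<Rightarrow> ('w::finite \<Rightarrow> real)
    \<Rightarrow> ('a::finite \<Rightarrow> 'w \<Rightarrow> real) \<Rightarrow> ('a \<Rightarrow> 'w \<Rightarrow> real) \<Rightarrow> bool" where
  "commitment_valuable M mu uS uR \<longleftrightarrow> persuasion_payoff M mu uS uR > cheap_talk_payoff M mu uS uR"

definition values_randomization :: "'m::finite itself \<Rightarrow> ('w::finite \<Rightarrow> real)
    \<Rightarrow> ('a::finite \<Rightarrow> 'w \<Rightarrow> real) \<Rightarrow> ('a \<Rightarrow> 'w \<Rightarrow> real) \<Rightarrow> bool" where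
  "values_randomization M mu uS uR \<longleftrightarrow>
     cheap_talk_payoff M mu uS uR > partitional_cheap_talk_payoff M mu uS uR"

text \<open>Transparent environments as points of R^(A + A x Omega): coordinates Inl a give v(a),
  coordinates Inr (a,w) give u_R(a,w); Sender utility u_S(a,w) = v(a).\<close>

definition env_uS :: "real ^ ('a::finite + 'a \<times> 'w::finite) \<Rightarrow> 'a \<Rightarrow> 'w \<Rightarrow> real" where
  "env_uS x = (\<lambda>a \<omega>. x $ Inl a)"

definition env_uR :: "real ^ ('a::finite + 'a \<times> 'w::finite) \<Rightarrow> 'a \<Rightarrow> 'w \<Rightarrow> real" where
  "env_uR x = (\<lambda>a \<omega>. x $ Inr (a, \<omega>))"

definition env_cube :: "(real ^ ('a::finite + 'a \<times> 'w::finite)) set" where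
  "env_cube = {x. \<forall>i. 0 \<le> x $ i \<and> x $ i \<le> 1}"

end

theory Submission
  imports Defs
begin

lemma cube_measure: "emeasure lebesgue (cbox 0 (vec 1 :: real^'n::finite)) = 1"
proof -
  have b: "(1::real^'n) \<bullet> b = 1" if "b \<in> Basis" for b
    using that by (auto simp: Basis_vec_def inner_axis)
  show ?thesis
    by (simp add: emeasure_lborel_cbox_eq b)
qed

lemma generic_set:
  "\<exists>E :: (real ^ ('a::finite + 'a \<times> 'w::finite)) set.
     E \<subseteq> env_cube \<and> E \<in> sets lebesgue \<and> emeasure lebesgue E = 1 \<and>
     (\<forall>x\<in>E. inj (\<lambda>a. x $ Inl a))"
proof -
  define H where "H = (\<lambda>p::'a\<times>'a. {x::real ^ ('a + 'a \<times> 'w). x $ Inl (fst p) = x $ Inl (snd p)})"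
  define N where "N = \<Union> (H ` {p. fst p \<noteq> snd p})"
  have negH: "negligible (H p)" if "fst p \<noteq> snd p" for p
  proof -
    have "H p = {x. (axis (Inl (fst p)) 1 - axis (Inl (snd p)) 1 :: real ^ ('a + 'a \<times> 'w)) \<bullet> x = 0}"
      by (auto simp: H_def inner_diff_left inner_axis')
    moreover have "(axis (Inl (fst p)) 1 - axis (Inl (snd p)) 1 :: real ^ ('a + 'a \<times> 'w)) \<noteq> 0"
    proof
      assume "(axis (Inl (fst p)) 1 - axis (Inl (snd p)) 1 :: real ^ ('a + 'a \<times> 'w)) = 0"
      then have "(axis (Inl (fst p)) 1 - axis (Inl (snd p)) 1 :: real ^ ('a + 'a \<times> 'w)) $ Inl (fst p) = 0"
        by simp
      then show False using that by (simp add: axis_def)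
    qed
    ultimately show ?thesis using negligible_hyperplane by metis
  qed
  have "negligible N"
    unfolding N_def by (rule negligible_Union) (auto intro: negH)
  then have Nnull: "N \<in> null_sets lebesgue" by (simp add: negligible_iff_null_sets)
  define E where "E = (env_cube :: (real ^ ('a + 'a \<times> 'w)) set) - N"
  have cube: "(env_cube :: (real ^ ('a + 'a \<times> 'w)) set) = cbox 0 (vec 1)"
    unfolding env_cube_def by (auto simp: mem_box_cart)
  have cs: "(env_cube :: (real ^ ('a + 'a \<times> 'w)) set) \<in> sets lebesgue"
    unfolding cube by simp
  have "E \<in> sets lebesgue" unfolding E_def using cs Nnull by auto
  moreover have "emeasure lebesgue E = 1"
  proof -
    have "emeasure lebesgue E = emeasure lebesgue (env_cube :: (real ^ ('a + 'a \<times> 'w)) set)"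
      unfolding E_def by (rule emeasure_Diff_null_set[OF Nnull cs])
    also have "\<dots> = emeasure lebesgue (cbox 0 (vec 1 :: real ^ ('a + 'a \<times> 'w)))"
      by (simp only: cube)
    also have "\<dots> = 1" by (rule cube_measure)
    finally show ?thesis .
  qed
  moreover have "\<forall>x\<in>E. inj (\<lambda>a. x $ Inl a)"
    by (auto simp: E_def N_def H_def inj_def) blast
  ultimately show ?thesis unfolding E_def by blast
qed
definition sgv :: "real ^ ('w::finite \<times> 'm::finite + 'm \<times> 'a::finite) \<Rightarrow> 'w \<Rightarrow> 'm \<Rightarrow> real" where
  "sgv z = (\<lambda>\<omega> m. z $ Inl (\<omega>, m))"
definition rhv :: "real ^ ('w::finite \<times> 'm::finite + 'm \<times> 'a::finite) \<Rightarrow> 'm \<Rightarrow> 'a \<Rightarrow> real" where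
  "rhv z = (\<lambda>m a. z $ Inr (m, a))"

lemma dist_le1: "is_dist p \<Longrightarrow> p x \<le> 1"
  unfolding is_dist_def
  by (metis finite_class.finite_UNIV iso_tuple_UNIV_I member_le_sum)

lemma closed_dist:
  assumes "\<And>x. continuous_on UNIV (\<lambda>z. P z x)"
  shows "closed {z. is_dist (P z)}"
  unfolding is_dist_def
  by (intro closed_Collect_conj closed_Collect_all closed_Collect_le closed_Collect_eq
      continuous_intros assms)

lemma cont_payoff:
  assumes "\<And>\<omega> m. continuous_on UNIV (\<lambda>z. S z \<omega> m)" "\<And>m a. continuous_on UNIV (\<lambda>z. R z m a)"
  shows "continuous_on UNIV (\<lambda>z. payoff mu u (S z) (R z))"
  unfolding payoff_def
  by (intro continuous_intros assms)

lemma closed_eq_set: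
  "closed {z :: real ^ ('w::finite \<times> 'm::finite + 'm \<times> 'a::finite).
      cheap_talk_eq mu uS uR (sgv z) (rhv z)}"
proof -
  have cs: "\<And>\<omega> m. continuous_on UNIV (\<lambda>z :: real ^ ('w \<times> 'm + 'm \<times> 'a). sgv z \<omega> m)"
    unfolding sgv_def by (intro continuous_intros)
  have cr: "\<And>m a. continuous_on UNIV (\<lambda>z :: real ^ ('w \<times> 'm + 'm \<times> 'a). rhv z m a)"
    unfolding rhv_def by (intro continuous_intros)
  have c1: "closed {z :: real ^ ('w \<times> 'm + 'm \<times> 'a). msg_strat (sgv z)}"
    unfolding msg_strat_def by (intro closed_Collect_all closed_dist cs)
  have c2: "closed {z :: real ^ ('w \<times> 'm + 'm \<times> 'a). act_strat (rhv z)}"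
    unfolding act_strat_def by (intro closed_Collect_all closed_dist cr)
  have c3: "closed {z :: real ^ ('w \<times> 'm + 'm \<times> 'a). S_BR mu uS (sgv z) (rhv z)}"
    unfolding S_BR_def
  proof (intro closed_Collect_all)
    fix \<sigma>' :: "'w \<Rightarrow> 'm \<Rightarrow> real"
    show "closed {z :: real ^ ('w \<times> 'm + 'm \<times> 'a). msg_strat \<sigma>' \<longrightarrow> payoff mu uS \<sigma>' (rhv z) \<le> payoff mu uS (sgv z) (rhv z)}"
    proof (cases "msg_strat \<sigma>'")
      case True
      then show ?thesis
        by simp (intro closed_Collect_le cont_payoff cs cr continuous_on_const)
    qed simp
  qed
  have c4: "closed {z :: real ^ ('w \<times> 'm + 'm \<times> 'a). R_BR mu uR (sgv z) (rhv z)}"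
    unfolding R_BR_def
  proof (intro closed_Collect_all)
    fix \<rho>' :: "'m \<Rightarrow> 'a \<Rightarrow> real"
    show "closed {z :: real ^ ('w \<times> 'm + 'm \<times> 'a). act_strat \<rho>' \<longrightarrow> payoff mu uR (sgv z) \<rho>' \<le> payoff mu uR (sgv z) (rhv z)}"
    proof (cases "act_strat \<rho>'")
      case True
      then show ?thesis
        by simp (intro closed_Collect_le cont_payoff cs cr continuous_on_const)
    qed simp
  qed
  show ?thesis
    unfolding cheap_talk_eq_def using c1 c2 c3 c4
    by (simp add: Collect_conj_eq closed_Int)
qed

lemma bounded_eq_set:
  "bounded {z :: real ^ ('w::finite \<times> 'm::finite + 'm \<times> 'a::finite).
      cheap_talk_eq mu uS uR (sgv z) (rhv z)}"
proof (rule bounded_subset[OF bounded_cbox[of 0 "vec 1"]], safe)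
  fix z :: "real ^ ('w \<times> 'm + 'm \<times> 'a)"
  assume "cheap_talk_eq mu uS uR (sgv z) (rhv z)"
  then have "msg_strat (sgv z)" "act_strat (rhv z)" by (auto simp: cheap_talk_eq_def)
  then have d1: "is_dist (sgv z \<omega>)" and d2: "is_dist (rhv z m)" for \<omega> m
    unfolding msg_strat_def act_strat_def by auto
  have "0 \<le> z $ i \<and> z $ i \<le> 1" for i
  proof (cases i)
    case (Inl p)
    then show ?thesis using d1[of "fst p"] dist_le1[OF d1[of "fst p"], of "snd p"]
      by (cases p) (auto simp: sgv_def is_dist_def)
  next
    case (Inr p)
    then show ?thesis using d2[of "fst p"] dist_le1[OF d2[of "fst p"], of "snd p"]
      by (cases p) (auto simp: rhv_def is_dist_def)
  qed
  then show "z \<in> cbox 0 (vec 1)" by (simp add: mem_box_cart)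
qed

lemma eq_attains:
  fixes mu :: "'w::finite \<Rightarrow> real" and uS uR :: "'a::finite \<Rightarrow> 'w \<Rightarrow> real"
  assumes "cheap_talk_eq mu uS uR (\<sigma>0 :: 'w \<Rightarrow> 'm::finite \<Rightarrow> real) \<rho>0"
  shows "\<exists>\<sigma> \<rho>. cheap_talk_eq mu uS uR (\<sigma> :: 'w \<Rightarrow> 'm \<Rightarrow> real) \<rho> \<and>
     (\<forall>\<sigma>' \<rho>'. cheap_talk_eq mu uS uR (\<sigma>' :: 'w \<Rightarrow> 'm \<Rightarrow> real) \<rho>' \<longrightarrow> payoff mu uS \<sigma>' \<rho>' \<le> payoff mu uS \<sigma> \<rho>)"
proof -
  define K where "K = {z :: real ^ ('w \<times> 'm + 'm \<times> 'a). cheap_talk_eq mu uS uR (sgv z) (rhv z)}"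
  define f where "f = (\<lambda>z :: real ^ ('w \<times> 'm + 'm \<times> 'a). payoff mu uS (sgv z) (rhv z))"
  have "compact K" unfolding K_def
    using closed_eq_set bounded_eq_set by (auto simp: compact_eq_bounded_closed)
  moreover have "continuous_on K f" unfolding f_def
    by (rule continuous_on_subset[OF cont_payoff]) (auto simp: sgv_def rhv_def intro!: continuous_intros)
  ultimately have cK: "compact (f ` K)" by (blast intro: compact_continuous_image)
  define enc where "enc = (\<lambda>(\<sigma> :: 'w \<Rightarrow> 'm \<Rightarrow> real) (\<rho> :: 'm \<Rightarrow> 'a \<Rightarrow> real).
     (\<chi> i. case i of Inl p \<Rightarrow> \<sigma> (fst p) (snd p) | Inr p \<Rightarrow> \<rho> (fst p) (snd p)) :: real ^ ('w \<times> 'm + 'm \<times> 'a))"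
  have dec: "sgv (enc \<sigma> \<rho>) = \<sigma>" "rhv (enc \<sigma> \<rho>) = \<rho>" for \<sigma> \<rho>
    by (auto simp: enc_def sgv_def rhv_def)
  have "enc \<sigma>0 \<rho>0 \<in> K" using assms by (simp add: K_def dec)
  then have "f ` K \<noteq> {}" by auto
  from compact_attains_sup[OF cK this] obtain z where z: "z \<in> K" "\<forall>t\<in>K. f t \<le> f z" by auto
  show ?thesis
  proof (intro exI conjI allI impI)
    show "cheap_talk_eq mu uS uR (sgv z) (rhv z)" using z by (simp add: K_def)
    fix \<sigma>' \<rho>' assume "cheap_talk_eq mu uS uR (\<sigma>' :: 'w \<Rightarrow> 'm \<Rightarrow> real) \<rho>'"
    then have "enc \<sigma>' \<rho>' \<in> K" by (simp add: K_def dec)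
    then have "f (enc \<sigma>' \<rho>') \<le> f z" using z by blast
    then show "payoff mu uS \<sigma>' \<rho>' \<le> payoff mu uS (sgv z) (rhv z)" by (simp add: f_def dec)
  qed
qed
lemma payoff_S: "payoff mu (\<lambda>a \<omega>. v a) \<sigma> \<rho> = (\<Sum>\<omega>\<in>UNIV. mu \<omega> * (\<Sum>m\<in>UNIV. \<sigma> \<omega> m * (\<Sum>a\<in>UNIV. \<rho> m a * v a)))"
  unfolding payoff_def by (simp add: sum_distrib_left mult.assoc)

lemma payoff_R: "payoff mu u \<sigma> \<rho> = (\<Sum>m\<in>UNIV. \<Sum>a\<in>UNIV. \<rho> m a * (\<Sum>\<omega>\<in>UNIV. mu \<omega> * \<sigma> \<omega> m * u a \<omega>))"
proof -
  have "payoff mu u \<sigma> \<rho> = (\<Sum>m\<in>UNIV. \<Sum>\<omega>\<in>UNIV. \<Sum>a\<in>UNIV. mu \<omega> * \<sigma> \<omega> m * \<rho> m a * u a \<omega>)"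
    unfolding payoff_def by (rule sum.swap)
  also have "\<dots> = (\<Sum>m\<in>UNIV. \<Sum>a\<in>UNIV. \<Sum>\<omega>\<in>UNIV. mu \<omega> * \<sigma> \<omega> m * \<rho> m a * u a \<omega>)"
    by (rule sum.cong[OF refl], rule sum.swap)
  also have "\<dots> = (\<Sum>m\<in>UNIV. \<Sum>a\<in>UNIV. \<rho> m a * (\<Sum>\<omega>\<in>UNIV. mu \<omega> * \<sigma> \<omega> m * u a \<omega>))"
    by (simp add: sum_distrib_left mult_ac)
  finally show ?thesis .
qed

lemma sum_upd_UNIV:
  fixes F :: "'m::finite \<Rightarrow> real"
  shows "(\<Sum>x\<in>UNIV. (F(m := y)) x) = (\<Sum>x\<in>UNIV. F x) - F m + y"
proof -
  have "(\<Sum>x\<in>UNIV. (F(m := y)) x) = (F(m := y)) m + (\<Sum>x\<in>UNIV - {m}. (F(m := y)) x)"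
    by (rule sum.remove) auto
  moreover have "(\<Sum>x\<in>UNIV. F x) = F m + (\<Sum>x\<in>UNIV - {m}. F x)"
    by (rule sum.remove) auto
  moreover have "(\<Sum>x\<in>UNIV - {m}. (F(m := y)) x) = (\<Sum>x\<in>UNIV - {m}. F x)"
    by (rule sum.cong) auto
  ultimately show ?thesis by simp
qed

lemma payoff_upd:
  "payoff mu u \<sigma> (\<rho>(m := q)) = payoff mu u \<sigma> \<rho>
     - (\<Sum>a\<in>UNIV. \<rho> m a * (\<Sum>\<omega>\<in>UNIV. mu \<omega> * \<sigma> \<omega> m * u a \<omega>))
     + (\<Sum>a\<in>UNIV. q a * (\<Sum>\<omega>\<in>UNIV. mu \<omega> * \<sigma> \<omega> m * u a \<omega>))"
proof -
  define F where "F = (\<lambda>m. \<Sum>a\<in>UNIV. \<rho> m a * (\<Sum>\<omega>\<in>UNIV. mu \<omega> * \<sigma> \<omega> m * u a \<omega>))"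
  have "payoff mu u \<sigma> (\<rho>(m := q)) = (\<Sum>x\<in>UNIV. (F(m := (\<Sum>a\<in>UNIV. q a * (\<Sum>\<omega>\<in>UNIV. mu \<omega> * \<sigma> \<omega> m * u a \<omega>)))) x)"
    unfolding payoff_R F_def by (rule sum.cong) auto
  also have "\<dots> = payoff mu u \<sigma> \<rho> - F m + (\<Sum>a\<in>UNIV. q a * (\<Sum>\<omega>\<in>UNIV. mu \<omega> * \<sigma> \<omega> m * u a \<omega>))"
    unfolding sum_upd_UNIV payoff_R F_def ..
  finally show ?thesis unfolding F_def .
qed

lemma dist_avg_le:
  fixes p h :: "'x::finite \<Rightarrow> real"
  assumes "is_dist p" "\<And>x. h x \<le> c"
  shows "(\<Sum>x\<in>UNIV. p x * h x) \<le> c"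
proof -
  have "(\<Sum>x\<in>UNIV. p x * h x) \<le> (\<Sum>x\<in>UNIV. p x * c)"
    using assms by (intro sum_mono mult_left_mono) (auto simp: is_dist_def)
  also have "\<dots> = c" using assms by (simp add: is_dist_def sum_distrib_right[symmetric])
  finally show ?thesis .
qed

lemma dist_avg_eq:
  fixes p h :: "'x::finite \<Rightarrow> real"
  assumes "is_dist p" "\<And>x. h x \<le> c" "(\<Sum>x\<in>UNIV. p x * h x) \<ge> c" "p x > 0"
  shows "h x = c"
proof -
  have nn: "\<forall>y\<in>UNIV. 0 \<le> p y * (c - h y)"
    using assms(1,2) by (auto simp: is_dist_def)
  have "(\<Sum>y\<in>UNIV. p y * (c - h y)) = (\<Sum>y\<in>UNIV. p y) * c - (\<Sum>y\<in>UNIV. p y * h y)"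
    by (simp add: algebra_simps sum_subtractf sum_distrib_left)
  also have "\<dots> \<le> 0" using assms(1,3) by (simp add: is_dist_def)
  finally have "(\<Sum>y\<in>UNIV. p y * (c - h y)) = 0"
    using nn by (meson antisym sum_nonneg)
  then have "p x * (c - h x) = 0"
    using nn by (simp add: sum_nonneg_eq_0_iff)
  then show ?thesis using assms(4) by simp
qed

lemma dist_ex: "is_dist (p :: 'x::finite \<Rightarrow> real) \<Longrightarrow> \<exists>x. p x > 0"
  unfolding is_dist_def
  by (metis less_eq_real_def sum_nonneg_eq_0_iff finite_class.finite_UNIV zero_neq_one)

lemma dist_delta: "is_dist (\<lambda>x. if x = (y :: 'x::finite) then 1 else (0::real))"
  unfolding is_dist_def by simp

lemma payoff_le1:
  assumes "msg_strat \<sigma>" "act_strat \<rho>" "is_dist mu" "\<And>a. v a \<le> 1"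
  shows "payoff mu (\<lambda>a \<omega>. v a) \<sigma> \<rho> \<le> 1"
  unfolding payoff_S using assms unfolding msg_strat_def act_strat_def
  by (intro dist_avg_le) auto
lemma ifmul1[simp]: "(if P then (1::real) else 0) * q = (if P then q else 0)" by simp
lemma ifmul2[simp]: "q * (if P then (1::real) else 0) = (if P then q else 0)" by simp

lemma main_game:
  fixes mu :: "'w::finite \<Rightarrow> real" and v :: "'a::finite \<Rightarrow> real" and uR :: "'a \<Rightarrow> 'w \<Rightarrow> real"
  assumes mupos: "\<forall>\<omega>. mu \<omega> > 0" and musum: "sum mu UNIV = 1"
    and injv: "inj v" and v1: "\<And>a. v a \<le> 1"
    and vr: "values_randomization TYPE('m::finite) mu (\<lambda>a \<omega>. v a) uR"
  shows "commitment_valuable TYPE('m) mu (\<lambda>a \<omega>. v a) uR"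
proof -
  define uS where "uS = (\<lambda>(a::'a) (\<omega>::'w). v a)"
  have dmu: "is_dist mu" using mupos musum by (auto simp: is_dist_def less_imp_le)
  define CT where "CT = {payoff mu uS \<sigma> \<rho> | (\<sigma> :: 'w \<Rightarrow> 'm \<Rightarrow> real) \<rho>. cheap_talk_eq mu uS uR \<sigma> \<rho>}"
  define PT where "PT = {payoff mu uS \<sigma> \<rho> | (\<sigma> :: 'w \<Rightarrow> 'm \<Rightarrow> real) \<rho>. cheap_talk_eq mu uS uR \<sigma> \<rho> \<and> partitional \<sigma>}"
  define PS where "PS = {payoff mu uS \<sigma> \<rho> | (\<sigma> :: 'w \<Rightarrow> 'm \<Rightarrow> real) \<rho>. msg_strat \<sigma> \<and> act_strat \<rho> \<and> R_BR mu uR \<sigma> \<rho>}"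
  have vr': "Sup CT > Sup PT"
    using vr unfolding values_randomization_def cheap_talk_payoff_def partitional_cheap_talk_payoff_def
      CT_def PT_def uS_def .
  have bPT: "bdd_above PT"
    unfolding PT_def uS_def using payoff_le1[OF _ _ dmu v1]
    by (intro bdd_aboveI[of _ 1]) (auto simp: cheap_talk_eq_def)
  have bPS: "bdd_above PS"
    unfolding PS_def uS_def using payoff_le1[OF _ _ dmu v1]
    by (intro bdd_aboveI[of _ 1]) auto
  have "CT \<noteq> {}"
  proof
    assume "CT = {}"
    then have "PT = {}" unfolding CT_def PT_def by auto
    with \<open>CT = {}\<close> vr' show False by simp
  qed
  then obtain \<sigma>1 :: "'w \<Rightarrow> 'm \<Rightarrow> real" and \<rho>1 where "cheap_talk_eq mu uS uR \<sigma>1 \<rho>1"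
    unfolding CT_def by auto
  from eq_attains[OF this] obtain \<sigma> :: "'w \<Rightarrow> 'm \<Rightarrow> real" and \<rho> where
    eq: "cheap_talk_eq mu uS uR \<sigma> \<rho>" and
    mx: "\<And>\<sigma>' \<rho>'. cheap_talk_eq mu uS uR (\<sigma>' :: 'w \<Rightarrow> 'm \<Rightarrow> real) \<rho>' \<Longrightarrow> payoff mu uS \<sigma>' \<rho>' \<le> payoff mu uS \<sigma> \<rho>"
    by blast
  have CTeq: "Sup CT = payoff mu uS \<sigma> \<rho>"
    unfolding CT_def by (rule cSup_eq_maximum) (use eq mx in auto)
  have ms: "msg_strat \<sigma>" and as: "act_strat \<rho>" and sbr: "S_BR mu uS \<sigma> \<rho>" and rbr: "R_BR mu uR \<sigma> \<rho>"
    using eq by (auto simp: cheap_talk_eq_def)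
  have dsig: "is_dist (\<sigma> \<omega>)" for \<omega> using ms by (simp add: msg_strat_def)
  have drho: "is_dist (\<rho> m)" for m using as by (simp add: act_strat_def)
  define w where "w = (\<lambda>m. \<Sum>a\<in>UNIV. \<rho> m a * v a)"
  define W where "W = Max (range w)"
  have wW: "w m \<le> W" for m unfolding W_def by simp
  have "W \<in> range w" unfolding W_def by (rule Max_in) auto
  then obtain m0 where m0: "w m0 = W" by auto
  have paySw: "payoff mu uS \<sigma>' \<rho> = (\<Sum>\<omega>\<in>UNIV. mu \<omega> * (\<Sum>m\<in>UNIV. \<sigma>' \<omega> m * w m))" for \<sigma>'
    unfolding uS_def payoff_S w_def ..
  define s0 where "s0 = (\<lambda>(\<omega>::'w) m. if m = m0 then 1 else (0::real))"
  have "msg_strat s0" unfolding msg_strat_def s0_def using dist_delta by auto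
  then have "payoff mu uS s0 \<rho> \<le> payoff mu uS \<sigma> \<rho>" using sbr by (simp add: S_BR_def)
  moreover have "payoff mu uS s0 \<rho> = W"
    unfolding paySw s0_def using m0 musum by (simp add: ifmul1 sum_distrib_right[symmetric])
  ultimately have geW: "W \<le> (\<Sum>\<omega>\<in>UNIV. mu \<omega> * (\<Sum>m\<in>UNIV. \<sigma> \<omega> m * w m))" by (simp add: paySw)
  have innerle: "(\<Sum>m\<in>UNIV. \<sigma> \<omega> m * w m) \<le> W" for \<omega>
    using dist_avg_le[OF dsig wW] .
  have innereq: "(\<Sum>m\<in>UNIV. \<sigma> \<omega> m * w m) = W" for \<omega>
    using dist_avg_eq[where h="\<lambda>\<omega>. \<Sum>m\<in>UNIV. \<sigma> \<omega> m * w m" and c=W, OF dmu innerle geW] mupos by blast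
  have sentW: "w m = W" if "\<sigma> \<omega> m > 0" for \<omega> m
    using dist_avg_eq[where h=w and c=W, OF dsig[of \<omega>] wW _ that] innereq[of \<omega>] by simp
  have payW: "payoff mu uS \<sigma> \<rho> = W"
    unfolding paySw innereq using musum by (simp add: sum_distrib_right[symmetric])
  define g where "g = (\<lambda>m a. \<Sum>\<omega>\<in>UNIV. mu \<omega> * \<sigma> \<omega> m * uR a \<omega>)"
  define r where "r = (\<lambda>m. \<Sum>a\<in>UNIV. \<rho> m a * g m a)"
  have gle: "g m b \<le> r m" for m b
  proof -
    have "act_strat (\<rho>(m := (\<lambda>a. if a = b then 1 else 0)))"
      using as dist_delta unfolding act_strat_def by auto
    then have "payoff mu uR \<sigma> (\<rho>(m := (\<lambda>a. if a = b then 1 else 0))) \<le> payoff mu uR \<sigma> \<rho>"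
      using rbr by (simp add: R_BR_def)
    then show ?thesis unfolding payoff_upd by (simp add: g_def r_def)
  qed
  have gsupp: "g m a = r m" if "\<rho> m a > 0" for m a
    using dist_avg_eq[where h="g m" and c="r m", OF drho[of m] gle _ that] by (simp add: r_def)
  show ?thesis
  proof (cases "\<exists>\<omega> m a. \<sigma> \<omega> m > 0 \<and> \<rho> m a > 0 \<and> v a \<noteq> W")
    case True
    then obtain \<omega>1 m1 a1 where h: "\<sigma> \<omega>1 m1 > 0" "\<rho> m1 a1 > 0" "v a1 \<noteq> W" by blast
    have wm1: "w m1 = W" using sentW[OF h(1)] .
    have "\<exists>a'. \<rho> m1 a' > 0 \<and> v a' > W"
    proof (rule ccontr)
      assume "\<not> ?thesis"
      then have nn: "\<forall>a\<in>UNIV. 0 \<le> \<rho> m1 a * (W - v a)"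
        using drho[of m1] unfolding is_dist_def
        by (metis UNIV_I diff_ge_0_iff_ge less_eq_real_def mult_eq_0_iff mult_nonneg_nonneg not_le)
      have "(\<Sum>a\<in>UNIV. \<rho> m1 a * (W - v a)) = (\<Sum>a\<in>UNIV. \<rho> m1 a) * W - w m1"
        by (simp add: w_def algebra_simps sum_subtractf sum_distrib_left)
      also have "\<dots> = 0" using drho[of m1] wm1 by (simp add: is_dist_def)
      finally have "\<rho> m1 a1 * (W - v a1) = 0" using nn by (simp add: sum_nonneg_eq_0_iff)
      then show False using h by simp
    qed
    then obtain a' where a': "\<rho> m1 a' > 0" "v a' > W" by blast
    define \<rho>n where "\<rho>n = \<rho>(m1 := (\<lambda>a. if a = a' then 1 else 0))"
    have asn: "act_strat \<rho>n"
      using as dist_delta unfolding act_strat_def \<rho>n_def by auto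
    have "payoff mu uR \<sigma> \<rho>n = payoff mu uR \<sigma> \<rho>"
      unfolding \<rho>n_def payoff_upd using gsupp[OF a'(1)] by (simp add: g_def r_def)
    then have rbrn: "R_BR mu uR \<sigma> \<rho>n" using rbr by (simp add: R_BR_def)
    define P where "P = (\<Sum>\<omega>\<in>UNIV. mu \<omega> * \<sigma> \<omega> m1)"
    have "mu \<omega>1 * \<sigma> \<omega>1 m1 > 0" using mupos h(1) by simp
    moreover have "mu \<omega>1 * \<sigma> \<omega>1 m1 \<le> P" unfolding P_def
      by (rule member_le_sum) (use mupos dsig in \<open>auto simp: is_dist_def less_imp_le\<close>)
    ultimately have Ppos: "P > 0" by linarith
    have "payoff mu uS \<sigma> \<rho>n = payoff mu uS \<sigma> \<rho> - P * w m1 + P * v a'"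
    proof -
      have gS: "(\<Sum>\<omega>\<in>UNIV. mu \<omega> * \<sigma> \<omega> m1 * uS a \<omega>) = P * v a" for a
        by (simp add: uS_def P_def sum_distrib_right)
      have e1: "(\<Sum>a\<in>UNIV. \<rho> m1 a * (P * v a)) = P * w m1"
        by (simp add: w_def sum_distrib_left mult_ac)
      show ?thesis unfolding \<rho>n_def payoff_upd gS e1 by simp
    qed
    then have "payoff mu uS \<sigma> \<rho>n > payoff mu uS \<sigma> \<rho>"
    proof -
      have "P * W < P * v a'" using Ppos a'(2) by simp
      moreover have "P * w m1 = P * W" using wm1 by simp
      ultimately show ?thesis using \<open>payoff mu uS \<sigma> \<rho>n = payoff mu uS \<sigma> \<rho> - P * w m1 + P * v a'\<close> by linarith
    qed
    moreover have "payoff mu uS \<sigma> \<rho>n \<in> PS" unfolding PS_def using ms asn rbrn by blast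
    ultimately have "Sup PS > Sup CT" using cSup_upper[OF _ bPS] CTeq by fastforce
    then show ?thesis unfolding commitment_valuable_def persuasion_payoff_def cheap_talk_payoff_def
      PS_def CT_def uS_def .
  next
    case False
    then have allW: "\<sigma> \<omega> m > 0 \<Longrightarrow> \<rho> m a > 0 \<Longrightarrow> v a = W" for \<omega> m a by blast
    obtain \<omega>0 :: 'w where True by blast
    obtain m2 where m2: "\<sigma> \<omega>0 m2 > 0" using dist_ex[OF dsig] by blast
    obtain a0 where a0: "\<rho> m2 a0 > 0" using dist_ex[OF drho] by blast
    have va0: "v a0 = W" using allW[OF m2 a0] .
    have sentdelta: "\<rho> m a = 0" if "\<sigma> \<omega> m > 0" "a \<noteq> a0" for \<omega> m a
    proof (rule ccontr)
      assume "\<rho> m a \<noteq> 0"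
      then have "\<rho> m a > 0" using drho[of m] by (simp add: is_dist_def less_le)
      then have "v a = v a0" using allW[OF that(1)] va0 by simp
      then show False using injv that(2) by (simp add: inj_eq)
    qed
    have sent1: "\<rho> m a0 > 0" if "\<sigma> \<omega> m > 0" for \<omega> m
    proof (rule ccontr)
      assume "\<not> \<rho> m a0 > 0"
      then have "\<rho> m a = 0" for a
        using sentdelta[OF that] drho[of m] by (cases "a = a0") (auto simp: is_dist_def less_le)
      then show False using drho[of m] by (simp add: is_dist_def)
    qed
    have gopt: "g m b \<le> g m a0" for m b
    proof (cases "\<exists>\<omega>. \<sigma> \<omega> m > 0")
      case True
      then obtain \<omega> where "\<sigma> \<omega> m > 0" by blast
      then show ?thesis using gle[of m b] gsupp[OF sent1] by metis
    next
      case False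
      then have "\<sigma> \<omega> m = 0" for \<omega> using dsig[of \<omega>] by (simp add: is_dist_def less_le)
      then show ?thesis by (simp add: g_def)
    qed
    define h where "h = (\<lambda>a. \<Sum>\<omega>\<in>UNIV. mu \<omega> * uR a \<omega>)"
    have hg: "h a = (\<Sum>m\<in>UNIV. g m a)" for a
    proof -
      have "(\<Sum>m\<in>UNIV. g m a) = (\<Sum>\<omega>\<in>UNIV. \<Sum>m\<in>UNIV. mu \<omega> * \<sigma> \<omega> m * uR a \<omega>)"
        unfolding g_def by (rule sum.swap)
      also have "\<dots> = (\<Sum>\<omega>\<in>UNIV. mu \<omega> * uR a \<omega> * (\<Sum>m\<in>UNIV. \<sigma> \<omega> m))"
        by (simp add: sum_distrib_left sum_distrib_right mult_ac)
      also have "\<dots> = h a" using dsig by (simp add: is_dist_def h_def)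
      finally show ?thesis by simp
    qed
    have hopt: "h b \<le> h a0" for b unfolding hg by (rule sum_mono) (rule gopt)
    define \<sigma>0 where "\<sigma>0 = (\<lambda>(\<omega>::'w) m. if m = m2 then 1 else (0::real))"
    define \<rho>0 where "\<rho>0 = (\<lambda>(m::'m) a. if a = a0 then 1 else (0::real))"
    have ms0: "msg_strat \<sigma>0" unfolding msg_strat_def \<sigma>0_def using dist_delta by auto
    have as0: "act_strat \<rho>0" unfolding act_strat_def \<rho>0_def using dist_delta by auto
    have part0: "partitional \<sigma>0" unfolding partitional_def \<sigma>0_def by auto
    have payS0: "payoff mu uS \<sigma>' \<rho>0 = v a0" if "msg_strat \<sigma>'" for \<sigma>'
    proof -
      have "payoff mu uS \<sigma>' \<rho>0 = (\<Sum>\<omega>\<in>UNIV. mu \<omega> * ((\<Sum>m\<in>UNIV. \<sigma>' \<omega> m) * v a0))"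
        unfolding uS_def payoff_S \<rho>0_def by (simp add: sum_distrib_right)
      also have "\<dots> = v a0" using that musum
        by (simp add: msg_strat_def is_dist_def sum_distrib_right[symmetric])
      finally show ?thesis .
    qed
    have sbr0: "S_BR mu uS \<sigma>0 \<rho>0" unfolding S_BR_def using payS0 ms0 by simp
    have payR0: "payoff mu uR \<sigma>0 \<rho>' = (\<Sum>a\<in>UNIV. \<rho>' m2 a * h a)" for \<rho>'
    proof -
      have "payoff mu uR \<sigma>0 \<rho>' = (\<Sum>m\<in>UNIV. \<Sum>a\<in>UNIV. \<rho>' m a * (if m = m2 then h a else 0))"
        unfolding payoff_R \<sigma>0_def h_def by (rule sum.cong[OF refl], rule sum.cong[OF refl]) auto
      also have "\<dots> = (\<Sum>a\<in>UNIV. \<rho>' m2 a * h a)"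
        by (simp add: if_distrib cong: if_cong) (simp add: sum.swap[of _ UNIV UNIV] if_distrib)
      finally show ?thesis .
    qed
    have rbr0: "R_BR mu uR \<sigma>0 \<rho>0" unfolding R_BR_def
    proof (intro allI impI)
      fix \<rho>' :: "'m \<Rightarrow> 'a \<Rightarrow> real" assume "act_strat \<rho>'"
      then have "(\<Sum>a\<in>UNIV. \<rho>' m2 a * h a) \<le> h a0"
        by (intro dist_avg_le hopt) (simp add: act_strat_def)
      then show "payoff mu uR \<sigma>0 \<rho>' \<le> payoff mu uR \<sigma>0 \<rho>0"
        unfolding payR0 by (simp add: \<rho>0_def)
    qed
    have "payoff mu uS \<sigma>0 \<rho>0 \<in> PT" unfolding PT_def cheap_talk_eq_def
      using ms0 as0 sbr0 rbr0 part0 by blast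
    then have "Sup PT \<ge> payoff mu uS \<sigma>0 \<rho>0" using cSup_upper[OF _ bPT] by blast
    moreover have "payoff mu uS \<sigma>0 \<rho>0 = Sup CT" using payS0[OF ms0] va0 payW CTeq by simp
    ultimately show ?thesis using vr' by simp
  qed
qed

theorem theorem5:
  fixes mu0 :: "'w::finite \<Rightarrow> real"
  assumes "\<forall>\<omega>. mu0 \<omega> > 0"
    and "sum mu0 UNIV = 1"
    and "CARD('m::finite) > max CARD('w) CARD('a::finite)"
  shows "\<exists>E :: (real ^ ('a + 'a \<times> 'w)) set.
           E \<subseteq> env_cube \<and> E \<in> sets lebesgue \<and> emeasure lebesgue E = 1 \<and>
           (\<forall>x\<in>E. values_randomization TYPE('m) mu0 (env_uS x) (env_uR x)
                    \<longrightarrow> commitment_valuable TYPE('m) mu0 (env_uS x) (env_uR x))"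
proof -
  obtain E :: "(real ^ ('a + 'a \<times> 'w)) set" where
    E: "E \<subseteq> env_cube" "E \<in> sets lebesgue" "emeasure lebesgue E = 1"
       "\<forall>x\<in>E. inj (\<lambda>a. x $ Inl a)"
    using generic_set by blast
  have "values_randomization TYPE('m) mu0 (env_uS x) (env_uR x)
          \<longrightarrow> commitment_valuable TYPE('m) mu0 (env_uS x) (env_uR x)" if x: "x \<in> E" for x
  proof
    assume vr: "values_randomization TYPE('m) mu0 (env_uS x) (env_uR x)"
    have inj: "inj (\<lambda>a. x $ Inl a)" using E(4) x by blast
    have le1: "x $ Inl a \<le> 1" for a using E(1) x by (auto simp: env_cube_def)
    show "commitment_valuable TYPE('m) mu0 (env_uS x) (env_uR x)"
      using main_game[where v="\<lambda>a. x $ Inl a", OF assms(1,2) inj le1] vr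
      by (simp add: env_uS_def)
  qed
  then show ?thesis using E by blast
qed

end
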